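(* Let $D\subseteq\Phi^+$ be a rook placement and $\xi\colon D\to\mathbb{C}^\times$ a map. Then the subspace $\mathfrak{p}\subseteq\mathfrak{n}$ spanned by the $e_{j,i}$, $(i,j)\in\Phi^+\setminus\mathcal{M}$, is a maximal $f_{D,\xi}$-isotropic subspace of $\mathfrak{n}$; that is, $f_{D,\xi}([x,y])=0$ for all $x,y\in\mathfrak{p}$, and no subspace of $\mathfrak{n}$ strictly containing $\mathfrak{p}$ has this property.
   Context: Let $n\ge1$ and let $\mathfrak{n}$ be the Lie algebra of strictly upper-triangular complex $n\times n$ matrices; $e_{i,j}$ denotes the elementary matrix with $1$ at position $(i,j)$. Identify $\mathfrak{n}^*$ with the strictly lower-triangular matrices via $\lambda(x)=\mathrm{tr}(\lambda x)$. Let $\Phi^+=\{(i,j)\in\mathbb{Z}^2:1\le j<i\le n\}$, with rows $\mathcal{R}_k=\{(k,s)\in\Phi^+\}$ and columns $\mathcal{C}_k=\{(r,k)\in\Phi^+\}$. A rook placement is a subset $D\subseteq\Phi^+$ with $|D\cap\mathcal{R}_k|\le 1$ and $|D\cap\mathcal{C}_k|\le1$ for all $k$. For a map $\xi\colon D\to\mathbb{C}^\times$, $f_{D,\xi}=\sum_{(i,j)\in D}\xi(i,j)e_{i,j}\in\mathfrak{n}^*$. Write $D=\{(i_1,j_1),\dots,(i_s,j_s)\}$ with $j_1<\dots<j_s$. Set $\mathcal{M}_{j_0}=\emptyset$ and, recursively for $r=1,\dots,s$, $\mathcal{M}_{j_r}=\{(i_r,q)\in\Phi^+:\ j_r<q<i_r,\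 (q,j_r)\notin\bigcup_{l=0}^{r-1}\mathcal{M}_{j_l}\}$, and $\mathcal{M}=\bigcup_{r=1}^s\mathcal{M}_{j_r}$. *)

theory Defs
  imports Complex_Main
begin

text \<open>Matrices are modelled as functions nat \<Rightarrow> nat \<Rightarrow> complex, with indices 1..n
  (entries outside 1..n are required to be zero where relevant).\<close>

type_synonym cmat = "nat \<Rightarrow> nat \<Rightarrow> complex"

definition Phi_pos :: "nat \<Rightarrow> (nat \<times> nat) set" where
  "Phi_pos n = {(i, j). 1 \<le> j \<and> j < i \<and> i \<le> n}"

definition nilp :: "nat \<Rightarrow> cmat set" where
  "nilp n = {x. \<forall>i j. x i j \<noteq> 0 \<longrightarrow> 1 \<le> i \<and> i < j \<and> j \<le> n}"

definition elem :: "nat \<Rightarrow> nat \<Rightarrow> cmat" where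
  "elem i j = (\<lambda>a b. if a = i \<and> b = j then 1 else 0)"

definition mmul :: "nat \<Rightarrow> cmat \<Rightarrow> cmat \<Rightarrow> cmat" where
  "mmul n x y = (\<lambda>i k. \<Sum>j = 1..n. x i j * y j k)"

definition bracket :: "nat \<Rightarrow> cmat \<Rightarrow> cmat \<Rightarrow> cmat" where
  "bracket n x y = (\<lambda>i k. mmul n x y i k - mmul n y x i k)"

definition mtrace :: "nat \<Rightarrow> cmat \<Rightarrow> complex" where
  "mtrace n x = (\<Sum>i = 1..n. x i i)"

definition functional :: "nat \<Rightarrow> cmat \<Rightarrow> cmat \<Rightarrow> complex" where
  "functional n lam x = mtrace n (mmul n lam x)"

definition rook_placement :: "nat \<Rightarrow> (nat \<times> nat) set \<Rightarrow> bool" where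
  "rook_placement n D \<longleftrightarrow> D \<subseteq> Phi_pos n \<and>
     (\<forall>k. card {p \<in> D. fst p = k} \<le> 1) \<and> (\<forall>k. card {p \<in> D. snd p = k} \<le> 1)"

definition f_D :: "(nat \<times> nat) set \<Rightarrow> (nat \<times> nat \<Rightarrow> complex) \<Rightarrow> cmat" where
  "f_D D \<xi> = (\<lambda>a b. if (a, b) \<in> D then \<xi> (a, b) else 0)"

text \<open>Mupto n D k = union of the sets M_j over the columns j < k of D
  (processed in increasing column order, as in the recursive definition).\<close>
fun Mupto :: "nat \<Rightarrow> (nat \<times> nat) set \<Rightarrow> nat \<Rightarrow> (nat \<times> nat) set" where
  "Mupto n D 0 = {}"
| "Mupto n D (Suc k) = Mupto n D k \<union>
     {(i, q) \<in> Phi_pos n. (i, k) \<in> D \<and> k < q \<and> q < i \<and> (q, k) \<notin> Mupto n D k}"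

definition Mset :: "nat \<Rightarrow> (nat \<times> nat) set \<Rightarrow> (nat \<times> nat) set" where
  "Mset n D = Mupto n D (Suc n)"

definition span_elems :: "(nat \<times> nat) set \<Rightarrow> cmat set" where
  "span_elems B = {x. \<exists>c. x = (\<lambda>a b. \<Sum>p\<in>B. c p * elem (fst p) (snd p) a b)}"

definition is_subspace :: "nat \<Rightarrow> cmat set \<Rightarrow> bool" where
  "is_subspace n S \<longleftrightarrow> S \<subseteq> nilp n \<and> (\<lambda>a b. 0) \<in> S \<and>
     (\<forall>x\<in>S. \<forall>y\<in>S. (\<lambda>a b. x a b + y a b) \<in> S) \<and>
     (\<forall>c::complex. \<forall>x\<in>S. (\<lambda>a b. c * x a b) \<in> S)"

definition isotropic :: "nat \<Rightarrow> cmat \<Rightarrow> cmat set \<Rightarrow> bool" where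
  "isotropic n lam S \<longleftrightarrow> (\<forall>x\<in>S. \<forall>y\<in>S. functional n lam (bracket n x y) = 0)"

definition max_isotropic :: "nat \<Rightarrow> cmat \<Rightarrow> cmat set \<Rightarrow> bool" where
  "max_isotropic n lam S \<longleftrightarrow> is_subspace n S \<and> isotropic n lam S \<and>
     (\<forall>T. is_subspace n T \<and> S \<subset> T \<longrightarrow> \<not> isotropic n lam T)"

end

theory Submission
  imports Defs
begin

lemma Mupto_mono: "k \<le> k' \<Longrightarrow> Mupto n D k \<subseteq> Mupto n D k'"
proof (induction k' )
  case 0 then show ?case by simp
next
  case (Suc k') then show ?case by (cases "k = Suc k'") auto
qed

lemma Mupto_D:
  "(i, q) \<in> Mupto n D K \<Longrightarrow> \<exists>k<K. (i, k) \<in> D \<and> k < q \<and> q < i \<and> (q, k) \<notin> Mupto n D k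
      \<and> (i, q) \<in> Phi_pos n \<and> (i, q) \<in> Mupto n D (Suc k)"
proof (induction K)
  case 0 then show ?case by simp
next
  case (Suc K)
  show ?case
  proof (cases "(i, q) \<in> Mupto n D K")
    case True
    then show ?thesis using Suc.IH less_SucI by blast
  next
    case False
    then show ?thesis using Suc.prems by auto
  qed
qed

lemma Mupto_iso:
  assumes "D \<subseteq> Phi_pos n" "(a, b) \<in> D" "b < c" "c < a"
  shows "(c, b) \<in> Mset n D \<or> (a, c) \<in> Mset n D"
proof -
  have an: "a \<le> n" "b < a" using assms unfolding Phi_pos_def by auto
  have ph: "(a, c) \<in> Phi_pos n" using assms an unfolding Phi_pos_def by auto
  show ?thesis
  proof (cases "(c, b) \<in> Mupto n D b")
    case True
    then show ?thesis using Mupto_mono[of b "Suc n" n D] an unfolding Mset_def by auto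
  next
    case False
    then have "(a, c) \<in> Mupto n D (Suc b)" using ph assms by auto
    then show ?thesis using Mupto_mono[of "Suc b" "Suc n" n D] an unfolding Mset_def by auto
  qed
qed

lemma spanD:
  assumes "x \<in> span_elems B" "x u v \<noteq> 0"
  shows "(u, v) \<in> B"
proof (rule ccontr)
  assume nb: "(u, v) \<notin> B"
  obtain c where c: "x = (\<lambda>a b. \<Sum>p\<in>B. c p * elem (fst p) (snd p) a b)"
    using assms(1) unfolding span_elems_def by blast
  have "x u v = (\<Sum>p\<in>B. c p * elem (fst p) (snd p) u v)" using c by simp
  also have "\<dots> = 0"
    by (rule sum.neutral) (use nb in \<open>auto simp: elem_def\<close>)
  finally show False using assms(2) by simp
qed

lemma spanI:
  assumes "finite B" "\<And>u v. x u v \<noteq> 0 \<Longrightarrow> (u, v) \<in> B"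
  shows "x \<in> span_elems B"
  unfolding span_elems_def
proof (intro CollectI exI[of _ "\<lambda>p. x (fst p) (snd p)"] ext)
  fix u v
  have "(\<Sum>p\<in>B. x (fst p) (snd p) * elem (fst p) (snd p) u v)
      = (\<Sum>p\<in>B. if p = (u, v) then x u v else 0)"
    by (rule sum.cong) (auto simp: elem_def)
  also have "\<dots> = x u v" using assms by (auto simp: sum.delta')
  finally show "x u v = (\<Sum>p\<in>B. x (fst p) (snd p) * elem (fst p) (snd p) u v)" by simp
qed

lemma finite_Phi: "finite (Phi_pos n)"
proof -
  have "Phi_pos n \<subseteq> {1..n} \<times> {1..n}" unfolding Phi_pos_def by auto
  then show ?thesis by (rule finite_subset) auto
qed

lemma functional_expand:
  "functional n lam z = (\<Sum>a = 1..n. \<Sum>b = 1..n. lam a b * z b a)"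
  unfolding functional_def mtrace_def mmul_def by simp

theorem proposition2p7:
  fixes n :: nat and D :: "(nat \<times> nat) set" and \<xi> :: "nat \<times> nat \<Rightarrow> complex"
  assumes "1 \<le> n"
    and "rook_placement n D"
    and "\<forall>p\<in>D. \<xi> p \<noteq> 0"
  shows "max_isotropic n (f_D D \<xi>)
           (span_elems ((\<lambda>(i, j). (j, i)) ` (Phi_pos n - Mset n D)))"
proof -
  define B where "B = (\<lambda>(i, j). (j, i)) ` (Phi_pos n - Mset n D)"
  define P where "P = span_elems B"
  define lam where "lam = f_D D \<xi>"
  have Bmem: "(u, v) \<in> B \<longleftrightarrow> (v, u) \<in> Phi_pos n \<and> (v, u) \<notin> Mset n D" for u v
    unfolding B_def by force
  have finB: "finite B" unfolding B_def using finite_Phi by auto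
  have Dsub: "D \<subseteq> Phi_pos n" using assms(2) unfolding rook_placement_def by auto
  have finD: "finite D" using Dsub finite_Phi finite_subset by blast
  have colU: "a = a'" if "(a, j) \<in> D" "(a', j) \<in> D" for a a' j
  proof -
    have "card {p \<in> D. snd p = j} \<le> Suc 0" using assms(2) unfolding rook_placement_def by auto
    moreover have "finite {p \<in> D. snd p = j}" using finD by auto
    ultimately show ?thesis using that card_le_Suc0_iff_eq by fastforce
  qed
  have lamD: "lam a b = (if (a, b) \<in> D then \<xi> (a, b) else 0)" for a b
    unfolding lam_def f_D_def by simp
  have PD: "x \<in> P \<Longrightarrow> x u v \<noteq> 0 \<Longrightarrow> (v, u) \<in> Phi_pos n \<and> (v, u) \<notin> Mset n D" for x u v
    using spanD[of x B u v] Bmem unfolding P_def by blast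
  have sub: "is_subspace n P"
    unfolding is_subspace_def
  proof (intro conjI ballI allI subsetI)
    fix x assume "x \<in> P"
    then show "x \<in> nilp n" unfolding nilp_def using PD[of x] unfolding Phi_pos_def by fastforce
  next
    show "(\<lambda>a b. 0) \<in> P" unfolding P_def by (rule spanI[OF finB]) simp
  next
    fix x y assume "x \<in> P" "y \<in> P"
    then show "(\<lambda>a b. x a b + y a b) \<in> P" unfolding P_def
      by (intro spanI[OF finB]) (metis add.left_neutral spanD)
  next
    fix c :: complex and x assume "x \<in> P"
    then show "(\<lambda>a b. c * x a b) \<in> P" unfolding P_def
      by (intro spanI[OF finB]) (metis mult_zero_right spanD)
  qed
  have iso: "isotropic n lam P"
    unfolding isotropic_def
  proof (intro ballI)
    fix x y assume x: "x \<in> P" and y: "y \<in> P"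
    show "functional n lam (bracket n x y) = 0"
      unfolding functional_expand
    proof (intro sum.neutral ballI)
      fix a b
      show "lam a b * bracket n x y b a = 0"
      proof (cases "(a, b) \<in> D")
        case False then show ?thesis by (simp add: lamD)
      next
        case True
        have t1: "x b c * y c a = 0" for c
        proof (rule ccontr)
          assume "x b c * y c a \<noteq> 0"
          then have "(c, b) \<in> Phi_pos n \<and> (c, b) \<notin> Mset n D" "(a, c) \<in> Phi_pos n \<and> (a, c) \<notin> Mset n D"
            using PD[OF x] PD[OF y] by auto
          then show False using Mupto_iso[OF Dsub True] unfolding Phi_pos_def by auto
        qed
        have t2: "y b c * x c a = 0" for c
        proof (rule ccontr)
          assume "y b c * x c a \<noteq> 0"
          then have "(c, b) \<in> Phi_pos n \<and> (c, b) \<notin> Mset n D" "(a, c) \<in> Phi_pos n \<and> (a, c) \<notin> Mset n D"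
            using PD[OF x] PD[OF y] by auto
          then show False using Mupto_iso[OF Dsub True] unfolding Phi_pos_def by auto
        qed
        have "(\<Sum>c = 1..n. x b c * y c a) = 0" "(\<Sum>c = 1..n. y b c * x c a) = 0"
          using t1 t2 by (simp_all add: sum.neutral)
        then show ?thesis unfolding bracket_def mmul_def by simp
      qed
    qed
  qed
  have maxi: "\<not> isotropic n lam T" if T: "is_subspace n T" "P \<subset> T" for T
  proof
    assume isoT: "isotropic n lam T"
    obtain x where xT: "x \<in> T" and xP: "x \<notin> P" using T(2) by blast
    have xn: "x \<in> nilp n" using T(1) xT unfolding is_subspace_def by auto
    have xnz: "x u v \<noteq> 0 \<Longrightarrow> 1 \<le> u \<and> u < v \<and> v \<le> n" for u v
      using xn unfolding nilp_def by auto
    obtain u v where uv: "x u v \<noteq> 0" "(u, v) \<notin> B"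
      using xP spanI[OF finB, of x] unfolding P_def by blast
    have "(v, u) \<in> Mset n D" using uv xnz[OF uv(1)] Bmem unfolding Phi_pos_def by auto
    define Q where "Q k \<longleftrightarrow> (\<exists>i q. x q i \<noteq> 0 \<and> (i, q) \<in> Mset n D \<and> (i, k) \<in> D \<and> k < q \<and> q < i
        \<and> (q, k) \<notin> Mupto n D k \<and> (i, q) \<in> Phi_pos n)" for k
    have "\<exists>k. Q k" using Mupto_D[of v u n D "Suc n"] \<open>(v, u) \<in> Mset n D\<close> uv(1)
      unfolding Q_def Mset_def by blast
    define j where "j = (LEAST k. Q k)"
    have Qj: "Q j" unfolding j_def using \<open>\<exists>k. Q k\<close> by (metis LeastI)
    have minj: "\<not> Q k" if "k < j" for k using that not_less_Least unfolding j_def by blast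
    obtain i q where iq: "x q i \<noteq> 0" "(i, q) \<in> Mset n D" "(i, j) \<in> D" "j < q" "q < i"
        "(q, j) \<notin> Mupto n D j" "(i, q) \<in> Phi_pos n"
      using Qj unfolding Q_def by blast
    have ij: "1 \<le> j" "i \<le> n" using iq(3) Dsub unfolding Phi_pos_def by auto
    have qjP: "(q, j) \<in> Phi_pos n" using ij iq unfolding Phi_pos_def by auto
    have qjM: "(q, j) \<notin> Mset n D"
    proof
      assume "(q, j) \<in> Mset n D"
      then obtain k where "k < j" "(q, j) \<in> Mupto n D (Suc k)"
        using Mupto_D[of q j n D "Suc n"] unfolding Mset_def by blast
      then show False using Mupto_mono[of "Suc k" j n D] iq(6) by auto
    qed
    define y where "y = elem j q"
    have yP: "y \<in> P" unfolding P_def y_def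
      by (rule spanI[OF finB]) (auto simp: elem_def Bmem qjP qjM split: if_splits)
    have yT: "y \<in> T" using yP T(2) by auto
    have zero: "functional n lam (bracket n x y) = 0" using isoT xT yT unfolding isotropic_def by blast
    have xbj: "x b j = 0" if "(q, b) \<in> D" for b
    proof (rule ccontr)
      assume nz: "x b j \<noteq> 0"
      then have bj: "1 \<le> b" "b < j" using xnz by auto
      have "(q, j) \<notin> Mupto n D (Suc b)" using Mupto_mono[of "Suc b" j n D] iq(6) bj by auto
      then have "(j, b) \<in> Mupto n D b" using qjP that bj iq(4) by auto
      then obtain k where k: "k < b" "(j, k) \<in> D" "(b, k) \<notin> Mupto n D k" "(j, b) \<in> Phi_pos n"
        using Mupto_D[of j b n D b] by blast
      have "b \<le> Suc n" using bj iq ij by simp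
      then have "(j, b) \<in> Mset n D" using \<open>(j, b) \<in> Mupto n D b\<close> Mupto_mono[of b "Suc n" n D]
        unfolding Mset_def by blast
      then have "Q k" unfolding Q_def using nz k bj by blast
      then show False using minj k(1) bj(2) by simp
    qed
    have qn: "q \<in> {1..n}" "j \<in> {1..n}" using qjP unfolding Phi_pos_def by auto
    have brk: "bracket n x y b a = (if a = q then x b j else 0) - (if b = j then x q a else 0)" for a b
    proof -
      have "(\<Sum>c = 1..n. x b c * y c a) = (\<Sum>c = 1..n. if c = j then (if a = q then x b j else 0) else 0)"
        by (rule sum.cong) (auto simp: y_def elem_def)
      also have "\<dots> = (if a = q then x b j else 0)" using qn by simp
      finally have 1: "(\<Sum>c = 1..n. x b c * y c a) = (if a = q then x b j else 0)" .
      have "(\<Sum>c = 1..n. y b c * x c a) = (\<Sum>c = 1..n. if c = q then (if b = j then x q a else 0) else 0)"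
        by (rule sum.cong) (auto simp: y_def elem_def)
      also have "\<dots> = (if b = j then x q a else 0)" using qn by simp
      finally have 2: "(\<Sum>c = 1..n. y b c * x c a) = (if b = j then x q a else 0)" .
      show ?thesis unfolding bracket_def mmul_def using 1 2 by simp
    qed
    have trm: "lam a b * bracket n x y b a = (if a = i then (if b = j then - (\<xi> (i, j) * x q i) else 0) else 0)" for a b
    proof (cases "(a, b) \<in> D")
      case False
      then show ?thesis using iq(3) by (auto simp: lamD)
    next
      case True
      have f: "(if a = q then x b j else 0) = 0" using xbj True by auto
      show ?thesis
      proof (cases "b = j")
        case True
        then have "a = i" using colU \<open>(a, b) \<in> D\<close> iq(3) by blast
        then show ?thesis using True f brk[where a=a and b=b] iq(5) \<open>(a, b) \<in> D\<close> by (auto simp: lamD)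
      next
        case False
        then show ?thesis using f brk[where a=a and b=b] by (auto simp: lamD)
      qed
    qed
    have in1: "i \<in> {1..n}" using iq(7) unfolding Phi_pos_def by auto
    define C where "C = - (\<xi> (i, j) * x q i)"
    have "functional n lam (bracket n x y)
        = (\<Sum>a = 1..n. \<Sum>b = 1..n. if a = i then (if b = j then C else 0) else 0)"
      unfolding functional_expand trm C_def ..
    also have "\<dots> = (\<Sum>a = 1..n. if a = i then C else 0)"
      by (rule sum.cong) (use qn in auto)
    also have "\<dots> = C" using in1 by simp
    finally have "functional n lam (bracket n x y) = - (\<xi> (i, j) * x q i)" unfolding C_def .
    then show False using zero assms(3) iq(3) iq(1) by simp
  qed
  show ?thesis unfolding max_isotropic_def using sub iso maxi
    unfolding P_def B_def lam_def by blast
qed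

end
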